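(* Consider the five-node network with $\mathcal N=\{1,2,3,4,5\}$, $\mathcal E=\{(3,4),(2,4),(4,5),(1,5)\}$, observing nodes $\mathcal J=\{1,2,3\}$ and decision node $5$, and take the time-sharing variable $Q$ constant. For random variables with joint law $P_{X_1,X_2,X_3,Y}P_{U_1|X_1}P_{U_2|X_2}P_{U_3|X_3}$ (finite alphabets), the following are equivalent for a pair $(\Delta,C_{\rm sum})\in\mathbb R_+^2$: (i) $\Delta\le I(Y;U_1,U_2,U_3)$ and there exist $C_{15},C_{24},C_{34},C_{45}\ge0$ with $C_{15}+C_{24}+C_{34}+C_{45}=C_{\rm sum}$ and $R_1,R_2,R_3\ge0$ such that $C_{15}\ge R_1$, $C_{24}\ge R_2$, $C_{34}\ge R_3$, $C_{45}\ge R_2+R_3$, $R_1\ge I(U_1;X_1|U_2,U_3)$, $R_2\ge I(U_2;X_2|U_1,U_3)$, $R_3\ge I(U_3;X_3|U_1,U_2)$, $R_2+R_3\ge I(X_2,X_3;U_2,U_3|U_1)$, $R_1+R_3\ge I(X_1,X_3;U_1,U_3|U_2)$, $R_1+R_2\ge I(X_1,X_2;U_1,U_2|U_3)$, $R_1+R_2+R_3\ge I(X_1,X_2,X_3;U_1,U_2,U_3)$; (ii) $\Delta\le I(Y;U_1,U_2,U_3)$ and $C_{\rm sum}\ge I(X_1,X_2,X_3;U_1,U_2,U_3)+I(X_2,X_3;U_2,U_3|U_1)$. Consequently the region $\mathcal{RI}_{\rm sum}$ equals the union over all conditionals $P_{U_1|X_1},P_{U_2|X_2},P_{U_3|X_3}$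 of the pairs satisfying (ii).
   Context: $\mathcal{RI}_{\rm sum}$ denotes the set of pairs $(\Delta,C_{\rm sum})\in\mathbb R_+^2$ for which, for some conditionals $P_{U_1|X_1},P_{U_2|X_2},P_{U_3|X_3}$, condition (i) holds (this is the set of pairs for which the relevance given by the achievability result for general networks is attainable with some edge capacities of total sum $C_{\rm sum}$). All mutual informations are computed under the joint law $P_{X_1,X_2,X_3,Y}P_{U_1|X_1}P_{U_2|X_2}P_{U_3|X_3}$. *)

theory Defs
  imports Complex_Main
begin

definition prob_of :: "('w::finite \<Rightarrow> real) \<Rightarrow> ('w \<Rightarrow> 'v) \<Rightarrow> 'v \<Rightarrow> real" where
  "prob_of P f v = (\<Sum>w\<in>{w. f w = v}. P w)"

definition entropy :: "('w::finite \<Rightarrow> real) \<Rightarrow> ('w \<Rightarrow> 'v) \<Rightarrow> real" where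
  "entropy P f = - (\<Sum>v\<in>range f. prob_of P f v * log 2 (prob_of P f v))"

definition cond_mi :: "('w::finite \<Rightarrow> real) \<Rightarrow> ('w \<Rightarrow> 'a) \<Rightarrow> ('w \<Rightarrow> 'b) \<Rightarrow> ('w \<Rightarrow> 'c) \<Rightarrow> real" where
  "cond_mi P A B C = entropy P (\<lambda>w. (A w, C w)) + entropy P (\<lambda>w. (B w, C w))
      - entropy P (\<lambda>w. (A w, B w, C w)) - entropy P C"

definition mi :: "('w::finite \<Rightarrow> real) \<Rightarrow> ('w \<Rightarrow> 'a) \<Rightarrow> ('w \<Rightarrow> 'b) \<Rightarrow> real" where
  "mi P A B = cond_mi P A B (\<lambda>_. ())"

definition is_pmf :: "('w::finite \<Rightarrow> real) \<Rightarrow> bool" where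
  "is_pmf P \<longleftrightarrow> (\<forall>w. 0 \<le> P w) \<and> sum P UNIV = 1"

definition is_channel :: "('x \<Rightarrow> 'u::finite \<Rightarrow> real) \<Rightarrow> bool" where
  "is_channel q \<longleftrightarrow> (\<forall>x. (\<forall>u. 0 \<le> q x u) \<and> sum (q x) UNIV = 1)"

type_synonym ('x1,'x2,'x3,'y,'u1,'u2,'u3) omega = "('x1 \<times> 'x2 \<times> 'x3 \<times> 'y) \<times> ('u1 \<times> 'u2 \<times> 'u3)"

definition jointP ::
  "('x1 \<times> 'x2 \<times> 'x3 \<times> 'y \<Rightarrow> real) \<Rightarrow> ('x1 \<Rightarrow> 'u1 \<Rightarrow> real) \<Rightarrow> ('x2 \<Rightarrow> 'u2 \<Rightarrow> real)
    \<Rightarrow> ('x3 \<Rightarrow> 'u3 \<Rightarrow> real) \<Rightarrow> ('x1,'x2,'x3,'y,'u1,'u2,'u3) omega \<Rightarrow> real" where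
  "jointP p q1 q2 q3 w = (case w of ((x1,x2,x3,y),(u1,u2,u3)) \<Rightarrow>
      p (x1,x2,x3,y) * q1 x1 u1 * q2 x2 u2 * q3 x3 u3)"

definition X1 :: "('x1,'x2,'x3,'y,'u1,'u2,'u3) omega \<Rightarrow> 'x1" where "X1 w = fst (fst w)"
definition X2 :: "('x1,'x2,'x3,'y,'u1,'u2,'u3) omega \<Rightarrow> 'x2" where "X2 w = fst (snd (fst w))"
definition X3 :: "('x1,'x2,'x3,'y,'u1,'u2,'u3) omega \<Rightarrow> 'x3" where "X3 w = fst (snd (snd (fst w)))"
definition Yv :: "('x1,'x2,'x3,'y,'u1,'u2,'u3) omega \<Rightarrow> 'y" where "Yv w = snd (snd (snd (fst w)))"
definition U1 :: "('x1,'x2,'x3,'y,'u1,'u2,'u3) omega \<Rightarrow> 'u1" where "U1 w = fst (snd w)"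
definition U2 :: "('x1,'x2,'x3,'y,'u1,'u2,'u3) omega \<Rightarrow> 'u2" where "U2 w = fst (snd (snd w))"
definition U3 :: "('x1,'x2,'x3,'y,'u1,'u2,'u3) omega \<Rightarrow> 'u3" where "U3 w = snd (snd (snd w))"

definition cond_i ::
  "(('x1::finite,'x2::finite,'x3::finite,'y::finite,'u1::finite,'u2::finite,'u3::finite) omega \<Rightarrow> real) \<Rightarrow> real \<Rightarrow> real \<Rightarrow> bool" where
  "cond_i P \<Delta> Csum \<longleftrightarrow>
     \<Delta> \<le> mi P Yv (\<lambda>w. (U1 w, U2 w, U3 w)) \<and>
     (\<exists>C15 C24 C34 C45 R1 R2 R3 :: real.
        0 \<le> C15 \<and> 0 \<le> C24 \<and> 0 \<le> C34 \<and> 0 \<le> C45 \<and>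
        C15 + C24 + C34 + C45 = Csum \<and>
        0 \<le> R1 \<and> 0 \<le> R2 \<and> 0 \<le> R3 \<and>
        C15 \<ge> R1 \<and> C24 \<ge> R2 \<and> C34 \<ge> R3 \<and> C45 \<ge> R2 + R3 \<and>
        R1 \<ge> cond_mi P U1 X1 (\<lambda>w. (U2 w, U3 w)) \<and>
        R2 \<ge> cond_mi P U2 X2 (\<lambda>w. (U1 w, U3 w)) \<and>
        R3 \<ge> cond_mi P U3 X3 (\<lambda>w. (U1 w, U2 w)) \<and>
        R2 + R3 \<ge> cond_mi P (\<lambda>w. (X2 w, X3 w)) (\<lambda>w. (U2 w, U3 w)) U1 \<and>
        R1 + R3 \<ge> cond_mi P (\<lambda>w. (X1 w, X3 w)) (\<lambda>w. (U1 w, U3 w)) U2 \<and>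
        R1 + R2 \<ge> cond_mi P (\<lambda>w. (X1 w, X2 w)) (\<lambda>w. (U1 w, U2 w)) U3 \<and>
        R1 + R2 + R3 \<ge> mi P (\<lambda>w. (X1 w, X2 w, X3 w)) (\<lambda>w. (U1 w, U2 w, U3 w)))"

definition cond_ii ::
  "(('x1::finite,'x2::finite,'x3::finite,'y::finite,'u1::finite,'u2::finite,'u3::finite) omega \<Rightarrow> real) \<Rightarrow> real \<Rightarrow> real \<Rightarrow> bool" where
  "cond_ii P \<Delta> Csum \<longleftrightarrow>
     \<Delta> \<le> mi P Yv (\<lambda>w. (U1 w, U2 w, U3 w)) \<and>
     Csum \<ge> mi P (\<lambda>w. (X1 w, X2 w, X3 w)) (\<lambda>w. (U1 w, U2 w, U3 w))
            + cond_mi P (\<lambda>w. (X2 w, X3 w)) (\<lambda>w. (U2 w, U3 w)) U1"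

text \<open>RI_sum for a fixed source law p and fixed (finite) auxiliary alphabets 'u1,'u2,'u3.\<close>
definition RI_sum ::
  "('x1::finite \<times> 'x2::finite \<times> 'x3::finite \<times> 'y::finite \<Rightarrow> real) \<Rightarrow>
   'u1::finite itself \<Rightarrow> 'u2::finite itself \<Rightarrow> 'u3::finite itself \<Rightarrow> (real \<times> real) set" where
  "RI_sum p _ _ _ = {(\<Delta>, Csum). 0 \<le> \<Delta> \<and> 0 \<le> Csum \<and>
      (\<exists>(q1::'x1 \<Rightarrow> 'u1 \<Rightarrow> real) (q2::'x2 \<Rightarrow> 'u2 \<Rightarrow> real) (q3::'x3 \<Rightarrow> 'u3 \<Rightarrow> real).
         is_channel q1 \<and> is_channel q2 \<and> is_channel q3 \<and> cond_i (jointP p q1 q2 q3) \<Delta> Csum)}"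

end

theory Submission
  imports Defs
begin


definition pr :: "('w::finite \<Rightarrow> real) \<Rightarrow> ('w \<Rightarrow> 'v) \<Rightarrow> 'w \<Rightarrow> real" where
  "pr P f w = prob_of P f (f w)"

lemma prob_of_alt: "prob_of P f v = (\<Sum>w\<in>UNIV. if f w = v then P w else 0)"
  unfolding prob_of_def by (simp add: sum.If_cases)

lemma ent_sample:
  fixes P :: "'w::finite \<Rightarrow> real"
  shows "entropy P f = - (\<Sum>w\<in>UNIV. P w * log 2 (pr P f w))"
proof -
  have "(\<Sum>w\<in>UNIV. P w * log 2 (pr P f w))
      = (\<Sum>v\<in>f ` UNIV. \<Sum>w\<in>{x. x \<in> UNIV \<and> f x = v}. P w * log 2 (pr P f w))"
    by (rule sum.image_gen) simp
  also have "\<dots> = (\<Sum>v\<in>range f. prob_of P f v * log 2 (prob_of P f v))"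
  proof (rule sum.cong[OF refl])
    fix v assume "v \<in> range f"
    have "(\<Sum>w\<in>{x. x \<in> UNIV \<and> f x = v}. P w * log 2 (pr P f w))
        = (\<Sum>w\<in>{x. f x = v}. P w * log 2 (prob_of P f v))"
      by (rule sum.cong) (auto simp: pr_def)
    also have "\<dots> = prob_of P f v * log 2 (prob_of P f v)"
      unfolding prob_of_def by (simp add: sum_distrib_right)
    finally show "(\<Sum>w\<in>{x. x \<in> UNIV \<and> f x = v}. P w * log 2 (pr P f w)) = prob_of P f v * log 2 (prob_of P f v)" .
  qed
  finally show ?thesis unfolding entropy_def by simp
qed

lemma pr_ge:
  fixes P :: "'w::finite \<Rightarrow> real"
  assumes "\<forall>w. 0 \<le> P w"
  shows "P w \<le> pr P f w"
proof -
  have "P w = (\<Sum>x\<in>{w}. P x)" by simp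
  also have "\<dots> \<le> (\<Sum>x\<in>{x. f x = f w}. P x)"
    by (rule sum_mono2) (use assms in auto)
  finally show ?thesis by (simp add: pr_def prob_of_def)
qed

lemma pr_nonneg:
  fixes P :: "'w::finite \<Rightarrow> real"
  assumes "\<forall>w. 0 \<le> P w"
  shows "0 \<le> pr P f w"
  unfolding pr_def prob_of_def using assms by (simp add: sum_nonneg)

lemma entropy_cong:
  fixes P :: "'w::finite \<Rightarrow> real"
  assumes "\<And>w w'. f w = f w' \<longleftrightarrow> g w = g w'"
  shows "entropy P f = entropy P g"
proof -
  have "pr P f w = pr P g w" for w
    unfolding pr_def prob_of_def using assms by simp
  then show ?thesis by (simp add: ent_sample)
qed

lemma ent_factor:
  fixes P :: "'w::finite \<Rightarrow> real"
  assumes nn: "\<forall>w. 0 \<le> P w"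
    and fac: "\<And>w. 0 < P w \<Longrightarrow> pr P (\<lambda>w. (F w, V w)) w = \<kappa> w * pr P F w \<and> 0 < \<kappa> w"
  shows "entropy P (\<lambda>w. (F w, V w)) = entropy P F - (\<Sum>w\<in>UNIV. P w * log 2 (\<kappa> w))"
proof -
  have "P w * log 2 (pr P (\<lambda>w. (F w, V w)) w) = P w * log 2 (pr P F w) + P w * log 2 (\<kappa> w)" for w
  proof (cases "P w = 0")
    case False
    with nn have p: "0 < P w" by (simp add: order_le_neq_trans)
    have "0 < pr P F w" using pr_ge[OF nn, of w F] p by simp
    with fac[OF p] show ?thesis by (simp add: log_mult_pos distrib_left)
  qed simp
  then show ?thesis by (simp add: ent_sample sum.distrib)
qed

lemma prob_of_bij:
  fixes P :: "'w::finite \<Rightarrow> real" and \<beta> :: "'z::finite \<Rightarrow> 'w"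
  assumes "bij \<beta>"
  shows "prob_of P f v = prob_of (\<lambda>z. P (\<beta> z)) (\<lambda>z. f (\<beta> z)) v"
proof -
  have "bij_betw \<beta> {z. f (\<beta> z) = v} {w. f w = v}"
    using assms unfolding bij_betw_def bij_def
    by (auto intro: inj_on_subset)
  then show ?thesis unfolding prob_of_def by (simp add: sum.reindex_bij_betw)
qed

lemma core:
  fixes Q :: "'a::finite \<times> 'b::finite \<Rightarrow> real" and G :: "'a \<times> 'b \<Rightarrow> 'c"
  assumes ind: "\<And>a b b'. G (a,b) = G (a,b')"
    and fa: "\<And>a b. G (a,b) = v \<Longrightarrow> Q (a,b) = r a * k b"
    and k1: "sum k UNIV = 1"
  shows "prob_of Q (\<lambda>ab. (G ab, snd ab)) (v, c) = k c * prob_of Q G v"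
proof -
  have "prob_of Q (\<lambda>ab. (G ab, snd ab)) (v, c)
      = (\<Sum>a\<in>UNIV. \<Sum>b\<in>UNIV. if G (a,b) = v \<and> b = c then Q (a,b) else 0)"
    unfolding prob_of_alt sum.cartesian_product UNIV_Times_UNIV by (rule sum.cong) (auto split: prod.splits)
  also have "\<dots> = (\<Sum>a\<in>UNIV. if G (a,c) = v then r a * k c else 0)"
  proof (rule sum.cong[OF refl])
    fix a
    have "(\<Sum>b\<in>UNIV. if G (a,b) = v \<and> b = c then Q (a,b) else 0)
        = (\<Sum>b\<in>UNIV. if b = c then (if G (a,c) = v then r a * k c else 0) else 0)"
      by (rule sum.cong) (auto simp: fa)
    also have "\<dots> = (if G (a,c) = v then r a * k c else 0)" by simp
    finally show "(\<Sum>b\<in>UNIV. if G (a,b) = v \<and> b = c then Q (a,b) else 0) = (if G (a,c) = v then r a * k c else 0)" .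
  qed
  also have "\<dots> = k c * (\<Sum>a\<in>UNIV. \<Sum>b\<in>UNIV. if G (a,b) = v then Q (a,b) else 0)"
  proof -
    have "(\<Sum>b\<in>UNIV. if G (a,b) = v then Q (a,b) else 0) = (if G (a,c) = v then r a else 0)" for a
    proof -
      have "(\<Sum>b\<in>UNIV. if G (a,b) = v then Q (a,b) else 0) = (\<Sum>b\<in>UNIV. if G (a,c) = v then r a * k b else 0)"
      proof (rule sum.cong[OF refl])
        fix b show "(if G (a,b) = v then Q (a,b) else 0) = (if G (a,c) = v then r a * k b else 0)"
          using ind[of a b c] fa[of a b] by auto
      qed
      also have "\<dots> = (if G (a,c) = v then r a else 0)"
        by (simp add: sum_distrib_left[symmetric] k1)
      finally show ?thesis .
    qed
    note h = this
    have "(\<Sum>a\<in>UNIV. if G (a,c) = v then r a * k c else 0) = k c * (\<Sum>a\<in>UNIV. if G (a,c) = v then r a else 0)"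
      by (auto simp: sum_distrib_left intro!: sum.cong)
    also have "\<dots> = k c * (\<Sum>a\<in>UNIV. \<Sum>b\<in>UNIV. if G (a,b) = v then Q (a,b) else 0)"
      using h by simp
    finally show ?thesis .
  qed
  also have "\<dots> = k c * prob_of Q G v"
    unfolding prob_of_alt sum.cartesian_product UNIV_Times_UNIV by (intro arg_cong[where f="\<lambda>x. k c * x"] sum.cong) (auto split: prod.splits)
  finally show ?thesis .
qed



lemma jointP_nn:
  assumes "is_pmf p" "is_channel q1" "is_channel q2" "is_channel q3"
  shows "\<forall>w. 0 \<le> jointP p q1 q2 q3 w"
  using assms unfolding is_pmf_def is_channel_def jointP_def
  by (auto split: prod.splits)

lemma jointP_pos:
  assumes "is_pmf p" "is_channel q1" "is_channel q2" "is_channel q3"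
    and "0 < jointP p q1 q2 q3 w"
  shows "0 < q1 (X1 w) (U1 w) \<and> 0 < q2 (X2 w) (U2 w) \<and> 0 < q3 (X3 w) (U3 w)"
proof -
  obtain x1 x2 x3 y u1 u2 u3 where w: "w = ((x1,x2,x3,y),(u1,u2,u3))" by (cases w) auto
  have "0 < p (x1,x2,x3,y) * q1 x1 u1 * q2 x2 u2 * q3 x3 u3"
    using assms(5) by (simp add: w jointP_def)
  hence nz: "p (x1,x2,x3,y) * q1 x1 u1 * q2 x2 u2 * q3 x3 u3 \<noteq> 0" by linarith
  have "0 \<le> q1 x1 u1" "0 \<le> q2 x2 u2" "0 \<le> q3 x3 u3"
    using assms(2-4) by (auto simp: is_channel_def)
  with nz show ?thesis by (simp add: w X1_def X2_def X3_def U1_def U2_def U3_def)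
qed

definition hs1 where "hs1 p q1 q2 q3 = (\<Sum>w\<in>UNIV. jointP p q1 q2 q3 w * log 2 (q1 (X1 w) (U1 w)))"
definition hs2 where "hs2 p q1 q2 q3 = (\<Sum>w\<in>UNIV. jointP p q1 q2 q3 w * log 2 (q2 (X2 w) (U2 w)))"
definition hs3 where "hs3 p q1 q2 q3 = (\<Sum>w\<in>UNIV. jointP p q1 q2 q3 w * log 2 (q3 (X3 w) (U3 w)))"

lemma step1:
  fixes p :: "'x1::finite \<times> 'x2::finite \<times> 'x3::finite \<times> 'y::finite \<Rightarrow> real"
    and q1 :: "'x1 \<Rightarrow> 'u1::finite \<Rightarrow> real" and q2 :: "'x2 \<Rightarrow> 'u2::finite \<Rightarrow> real"
    and q3 :: "'x3 \<Rightarrow> 'u3::finite \<Rightarrow> real"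
  assumes ch: "is_pmf p" "is_channel q1" "is_channel q2" "is_channel q3"
    and ind: "\<And>xx u1 u1' u2 u3. F (xx,(u1,u2,u3)) = F (xx,(u1',u2,u3))"
    and det: "\<And>w w'. F w = F w' \<Longrightarrow> X1 w = X1 w'"
  shows "entropy (jointP p q1 q2 q3) (\<lambda>w. (F w, U1 w)) = entropy (jointP p q1 q2 q3) F - hs1 p q1 q2 q3"
  unfolding hs1_def
proof (rule ent_factor[OF jointP_nn[OF ch]])
  fix w assume pos: "0 < jointP p q1 q2 q3 w"
  let ?P = "jointP p q1 q2 q3"
  define \<beta> :: "(('x1 \<times> 'x2 \<times> 'x3 \<times> 'y) \<times> 'u2 \<times> 'u3) \<times> 'u1 \<Rightarrow> _"
    where "\<beta> = (\<lambda>((xx,(u2,u3)),u1). (xx,(u1,u2,u3)))"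
  have bij: "bij \<beta>"
    unfolding \<beta>_def by (rule o_bij[where g="\<lambda>(xx,(u1,u2,u3)). ((xx,(u2,u3)),u1)"]) (auto simp: fun_eq_iff)
  have "pr ?P (\<lambda>w. (F w, U1 w)) w = prob_of (\<lambda>z. ?P (\<beta> z)) (\<lambda>z. (F (\<beta> z), snd z)) (F w, U1 w)"
    unfolding pr_def by (subst prob_of_bij[OF bij]) (simp add: \<beta>_def U1_def split_beta)
  also have "\<dots> = q1 (X1 w) (U1 w) * prob_of (\<lambda>z. ?P (\<beta> z)) (\<lambda>z. F (\<beta> z)) (F w)"
  proof (rule core[where G="\<lambda>z. F (\<beta> z)" and r="\<lambda>(xx,(u2,u3)). p xx * q2 (fst (snd xx)) u2 * q3 (fst (snd (snd xx))) u3"])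
    show "F (\<beta> (a, b)) = F (\<beta> (a, b'))" for a b b'
      by (cases a) (auto simp: \<beta>_def ind)
    show "sum (q1 (X1 w)) UNIV = 1" using ch(2) by (simp add: is_channel_def)
    show "?P (\<beta> (a, b)) = (case a of (xx, u2, u3) \<Rightarrow> p xx * q2 (fst (snd xx)) u2 * q3 (fst (snd (snd xx))) u3) * q1 (X1 w) b"
      if "F (\<beta> (a, b)) = F w" for a b
    proof -
      have "X1 (\<beta> (a,b)) = X1 w" using det[OF that] .
      then show ?thesis
        by (cases a) (auto simp: \<beta>_def jointP_def X1_def split: prod.splits)
    qed
  qed
  also have "\<dots> = q1 (X1 w) (U1 w) * pr ?P F w"
    unfolding pr_def by (subst prob_of_bij[OF bij]) simp
  finally show "pr ?P (\<lambda>w. (F w, U1 w)) w = q1 (X1 w) (U1 w) * pr ?P F w \<and> 0 < q1 (X1 w) (U1 w)"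
    using jointP_pos[OF ch pos] by simp
qed

lemma step2:
  fixes p :: "'x1::finite \<times> 'x2::finite \<times> 'x3::finite \<times> 'y::finite \<Rightarrow> real"
    and q1 :: "'x1 \<Rightarrow> 'u1::finite \<Rightarrow> real" and q2 :: "'x2 \<Rightarrow> 'u2::finite \<Rightarrow> real"
    and q3 :: "'x3 \<Rightarrow> 'u3::finite \<Rightarrow> real"
  assumes ch: "is_pmf p" "is_channel q1" "is_channel q2" "is_channel q3"
    and ind: "\<And>xx u1 u2 u2' u3. F (xx,(u1,u2,u3)) = F (xx,(u1,u2',u3))"
    and det: "\<And>w w'. F w = F w' \<Longrightarrow> X2 w = X2 w'"
  shows "entropy (jointP p q1 q2 q3) (\<lambda>w. (F w, U2 w)) = entropy (jointP p q1 q2 q3) F - hs2 p q1 q2 q3"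
  unfolding hs2_def
proof (rule ent_factor[OF jointP_nn[OF ch]])
  fix w assume pos: "0 < jointP p q1 q2 q3 w"
  let ?P = "jointP p q1 q2 q3"
  define \<beta> :: "(('x1 \<times> 'x2 \<times> 'x3 \<times> 'y) \<times> 'u1 \<times> 'u3) \<times> 'u2 \<Rightarrow> _"
    where "\<beta> = (\<lambda>((xx,(u1,u3)),u2). (xx,(u1,u2,u3)))"
  have bij: "bij \<beta>"
    unfolding \<beta>_def by (rule o_bij[where g="\<lambda>(xx,(u1,u2,u3)). ((xx,(u1,u3)),u2)"]) (auto simp: fun_eq_iff)
  have "pr ?P (\<lambda>w. (F w, U2 w)) w = prob_of (\<lambda>z. ?P (\<beta> z)) (\<lambda>z. (F (\<beta> z), snd z)) (F w, U2 w)"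
    unfolding pr_def by (subst prob_of_bij[OF bij]) (simp add: \<beta>_def U2_def split_beta)
  also have "\<dots> = q2 (X2 w) (U2 w) * prob_of (\<lambda>z. ?P (\<beta> z)) (\<lambda>z. F (\<beta> z)) (F w)"
  proof (rule core[where G="\<lambda>z. F (\<beta> z)" and r="\<lambda>(xx,(u1,u3)). p xx * q1 (fst xx) u1 * q3 (fst (snd (snd xx))) u3"])
    show "F (\<beta> (a, b)) = F (\<beta> (a, b'))" for a b b'
      by (cases a) (auto simp: \<beta>_def ind)
    show "sum (q2 (X2 w)) UNIV = 1" using ch(3) by (simp add: is_channel_def)
    show "?P (\<beta> (a, b)) = (case a of (xx, u1, u3) \<Rightarrow> p xx * q1 (fst xx) u1 * q3 (fst (snd (snd xx))) u3) * q2 (X2 w) b"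
      if "F (\<beta> (a, b)) = F w" for a b
    proof -
      have "X2 (\<beta> (a,b)) = X2 w" using det[OF that] .
      then show ?thesis
        by (cases a) (auto simp: \<beta>_def jointP_def X2_def split: prod.splits)
    qed
  qed
  also have "\<dots> = q2 (X2 w) (U2 w) * pr ?P F w"
    unfolding pr_def by (subst prob_of_bij[OF bij]) simp
  finally show "pr ?P (\<lambda>w. (F w, U2 w)) w = q2 (X2 w) (U2 w) * pr ?P F w \<and> 0 < q2 (X2 w) (U2 w)"
    using jointP_pos[OF ch pos] by simp
qed

lemma step3:
  fixes p :: "'x1::finite \<times> 'x2::finite \<times> 'x3::finite \<times> 'y::finite \<Rightarrow> real"
    and q1 :: "'x1 \<Rightarrow> 'u1::finite \<Rightarrow> real" and q2 :: "'x2 \<Rightarrow> 'u2::finite \<Rightarrow> real"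
    and q3 :: "'x3 \<Rightarrow> 'u3::finite \<Rightarrow> real"
  assumes ch: "is_pmf p" "is_channel q1" "is_channel q2" "is_channel q3"
    and ind: "\<And>xx u1 u2 u3 u3'. F (xx,(u1,u2,u3)) = F (xx,(u1,u2,u3'))"
    and det: "\<And>w w'. F w = F w' \<Longrightarrow> X3 w = X3 w'"
  shows "entropy (jointP p q1 q2 q3) (\<lambda>w. (F w, U3 w)) = entropy (jointP p q1 q2 q3) F - hs3 p q1 q2 q3"
  unfolding hs3_def
proof (rule ent_factor[OF jointP_nn[OF ch]])
  fix w assume pos: "0 < jointP p q1 q2 q3 w"
  let ?P = "jointP p q1 q2 q3"
  define \<beta> :: "(('x1 \<times> 'x2 \<times> 'x3 \<times> 'y) \<times> 'u1 \<times> 'u2) \<times> 'u3 \<Rightarrow> _"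
    where "\<beta> = (\<lambda>((xx,(u1,u2)),u3). (xx,(u1,u2,u3)))"
  have bij: "bij \<beta>"
    unfolding \<beta>_def by (rule o_bij[where g="\<lambda>(xx,(u1,u2,u3)). ((xx,(u1,u2)),u3)"]) (auto simp: fun_eq_iff)
  have "pr ?P (\<lambda>w. (F w, U3 w)) w = prob_of (\<lambda>z. ?P (\<beta> z)) (\<lambda>z. (F (\<beta> z), snd z)) (F w, U3 w)"
    unfolding pr_def by (subst prob_of_bij[OF bij]) (simp add: \<beta>_def U3_def split_beta)
  also have "\<dots> = q3 (X3 w) (U3 w) * prob_of (\<lambda>z. ?P (\<beta> z)) (\<lambda>z. F (\<beta> z)) (F w)"
  proof (rule core[where G="\<lambda>z. F (\<beta> z)" and r="\<lambda>(xx,(u1,u2)). p xx * q1 (fst xx) u1 * q2 (fst (snd xx)) u2"])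
    show "F (\<beta> (a, b)) = F (\<beta> (a, b'))" for a b b'
      by (cases a) (auto simp: \<beta>_def ind)
    show "sum (q3 (X3 w)) UNIV = 1" using ch(4) by (simp add: is_channel_def)
    show "?P (\<beta> (a, b)) = (case a of (xx, u1, u2) \<Rightarrow> p xx * q1 (fst xx) u1 * q2 (fst (snd xx)) u2) * q3 (X3 w) b"
      if "F (\<beta> (a, b)) = F w" for a b
    proof -
      have "X3 (\<beta> (a,b)) = X3 w" using det[OF that] .
      then show ?thesis
        by (cases a) (auto simp: \<beta>_def jointP_def X3_def split: prod.splits)
    qed
  qed
  also have "\<dots> = q3 (X3 w) (U3 w) * pr ?P F w"
    unfolding pr_def by (subst prob_of_bij[OF bij]) simp
  finally show "pr ?P (\<lambda>w. (F w, U3 w)) w = q3 (X3 w) (U3 w) * pr ?P F w \<and> 0 < q3 (X3 w) (U3 w)"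
    using jointP_pos[OF ch pos] by simp
qed



lemma key_ineq:
  fixes P :: "'w::finite \<Rightarrow> real" and A :: "'w \<Rightarrow> 'a" and B :: "'w \<Rightarrow> 'b" and C :: "'w \<Rightarrow> 'c"
  assumes nn: "\<forall>w. 0 \<le> P w"
  defines "abc \<equiv> (\<lambda>w. (A w, B w, C w))" and "ac \<equiv> (\<lambda>w. (A w, C w))" and "bc \<equiv> (\<lambda>w. (B w, C w))"
  shows "(\<Sum>w\<in>UNIV. P w * (pr P ac w * pr P bc w / (pr P abc w * pr P C w))) \<le> (\<Sum>w\<in>UNIV. P w)"
proof -
  define D where "D w = P w / (pr P abc w * pr P C w)" for w
  have a: "P w * (pr P ac w * pr P bc w / (pr P abc w * pr P C w))
      = (\<Sum>w1\<in>UNIV. \<Sum>w2\<in>UNIV. if ac w1 = ac w \<and> bc w2 = bc w then D w * P w1 * P w2 else 0)" for w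
  proof -
    have "P w * (pr P ac w * pr P bc w / (pr P abc w * pr P C w)) = D w * (pr P ac w * pr P bc w)"
      by (simp add: D_def)
    also have "\<dots> = D w * ((\<Sum>w1\<in>UNIV. if ac w1 = ac w then P w1 else 0) * (\<Sum>w2\<in>UNIV. if bc w2 = bc w then P w2 else 0))"
      by (simp add: pr_def prob_of_alt)
    also have "\<dots> = (\<Sum>w1\<in>UNIV. \<Sum>w2\<in>UNIV. D w * ((if ac w1 = ac w then P w1 else 0) * (if bc w2 = bc w then P w2 else 0)))"
      by (subst sum_product) (simp only: sum_distrib_left)
    also have "\<dots> = (\<Sum>w1\<in>UNIV. \<Sum>w2\<in>UNIV. if ac w1 = ac w \<and> bc w2 = bc w then D w * P w1 * P w2 else 0)"
      by (intro sum.cong refl) auto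
    finally show ?thesis .
  qed
  have b: "(\<Sum>w\<in>UNIV. \<Sum>w1\<in>UNIV. \<Sum>w2\<in>UNIV. if ac w1 = ac w \<and> bc w2 = bc w then D w * P w1 * P w2 else 0)
     = (\<Sum>w1\<in>UNIV. \<Sum>w2\<in>UNIV. \<Sum>w\<in>UNIV. if ac w1 = ac w \<and> bc w2 = bc w then D w * P w1 * P w2 else 0)"
    by (subst sum.swap) (subst (2) sum.swap, rule refl)
  have c: "(\<Sum>w\<in>UNIV. if ac w1 = ac w \<and> bc w2 = bc w then D w * P w1 * P w2 else 0)
      \<le> (if C w2 = C w1 then P w1 * P w2 / pr P C w1 else 0)" for w1 w2
  proof (cases "C w2 = C w1")
    case False
    then have "(\<Sum>w\<in>UNIV. if ac w1 = ac w \<and> bc w2 = bc w then D w * P w1 * P w2 else (0::real)) = 0"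
      by (intro sum.neutral) (auto simp: ac_def bc_def)
    then show ?thesis using False by simp
  next
    case True
    define v where "v = (A w1, B w2, C w1)"
    define m where "m = prob_of P abc v"
    define K where "K = P w1 * P w2 / (m * pr P C w1)"
    have "(\<Sum>w\<in>UNIV. if ac w1 = ac w \<and> bc w2 = bc w then D w * P w1 * P w2 else 0)
        = (\<Sum>w\<in>UNIV. if abc w = v then P w * K else 0)"
    proof (rule sum.cong[OF refl])
      fix w
      have eq: "(ac w1 = ac w \<and> bc w2 = bc w) = (abc w = v)"
        using True by (auto simp: ac_def bc_def abc_def v_def)
      have "abc w = v \<Longrightarrow> pr P abc w = m \<and> pr P C w = pr P C w1"
        by (auto simp: pr_def m_def abc_def v_def)
      then show "(if ac w1 = ac w \<and> bc w2 = bc w then D w * P w1 * P w2 else 0) = (if abc w = v then P w * K else 0)"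
        unfolding eq by (auto simp: D_def K_def)
    qed
    also have "\<dots> = m * K"
      unfolding m_def prob_of_alt sum_distrib_right by (intro sum.cong refl) auto
    also have "\<dots> \<le> P w1 * P w2 / pr P C w1"
    proof -
      have m0: "0 \<le> m" unfolding m_def prob_of_def using nn by (simp add: sum_nonneg)
      have x0: "0 \<le> P w1 * P w2 / pr P C w1" using nn pr_nonneg[OF nn, of C w1] by (simp add: divide_nonneg_nonneg)
      have "m * K = (m / m) * (P w1 * P w2 / pr P C w1)" by (simp add: K_def)
      also have "\<dots> \<le> 1 * (P w1 * P w2 / pr P C w1)"
        by (rule mult_right_mono[OF _ x0]) (cases "m = 0", auto)
      finally show ?thesis by simp
    qed
    finally show ?thesis using True by simp
  qed
  have d: "(\<Sum>w1\<in>UNIV. \<Sum>w2\<in>UNIV. if C w2 = C w1 then P w1 * P w2 / pr P C w1 else 0) \<le> (\<Sum>w\<in>UNIV. P w)"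
  proof (rule sum_mono)
    fix w1
    have "(\<Sum>w2\<in>UNIV. if C w2 = C w1 then P w1 * P w2 / pr P C w1 else 0)
        = P w1 / pr P C w1 * (\<Sum>w2\<in>UNIV. if C w2 = C w1 then P w2 else 0)"
      by (simp add: sum_distrib_left if_distrib cong: if_cong)
    also have "\<dots> = P w1 * (pr P C w1 / pr P C w1)"
      by (simp add: pr_def prob_of_alt)
    also have "\<dots> \<le> P w1 * 1"
      using nn by (intro mult_left_mono) (auto simp: divide_le_eq_1)
    finally show "(\<Sum>w2\<in>UNIV. if C w2 = C w1 then P w1 * P w2 / pr P C w1 else 0) \<le> P w1" by simp
  qed
  have "(\<Sum>w\<in>UNIV. P w * (pr P ac w * pr P bc w / (pr P abc w * pr P C w)))
     = (\<Sum>w1\<in>UNIV. \<Sum>w2\<in>UNIV. \<Sum>w\<in>UNIV. if ac w1 = ac w \<and> bc w2 = bc w then D w * P w1 * P w2 else 0)"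
    by (simp only: a b)
  also have "\<dots> \<le> (\<Sum>w1\<in>UNIV. \<Sum>w2\<in>UNIV. if C w2 = C w1 then P w1 * P w2 / pr P C w1 else 0)"
    by (intro sum_mono c)
  also have "\<dots> \<le> (\<Sum>w\<in>UNIV. P w)" by (rule d)
  finally show ?thesis .
qed


lemma cond_mi_nonneg:
  fixes P :: "'w::finite \<Rightarrow> real" and A :: "'w \<Rightarrow> 'a" and B :: "'w \<Rightarrow> 'b" and C :: "'w \<Rightarrow> 'c"
  assumes nn: "\<forall>w. 0 \<le> P w"
  shows "0 \<le> cond_mi P A B C"
proof -
  let ?abc = "\<lambda>w. (A w, B w, C w)" and ?ac = "\<lambda>w. (A w, C w)" and ?bc = "\<lambda>w. (B w, C w)"
  define \<rho> where "\<rho> w = pr P ?ac w * pr P ?bc w / (pr P ?abc w * pr P C w)" for w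
  have eq: "cond_mi P A B C = (\<Sum>w\<in>UNIV. P w * (log 2 (pr P ?abc w) + log 2 (pr P C w) - log 2 (pr P ?ac w) - log 2 (pr P ?bc w)))"
    unfolding cond_mi_def ent_sample by (simp add: sum.distrib sum_subtractf algebra_simps)
  have pt: "P w * (1 - \<rho> w) / ln 2 \<le> P w * (log 2 (pr P ?abc w) + log 2 (pr P C w) - log 2 (pr P ?ac w) - log 2 (pr P ?bc w))" for w
  proof (cases "P w = 0")
    case True then show ?thesis by simp
  next
    case False
    with nn have p: "0 < P w" by (simp add: order_le_neq_trans)
    have pos: "0 < pr P ?abc w" "0 < pr P ?ac w" "0 < pr P ?bc w" "0 < pr P C w"
      using pr_ge[OF nn, of w] p by (metis order_less_le_trans)+
    have rpos: "0 < \<rho> w" unfolding \<rho>_def using pos by simp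
    have "ln (\<rho> w) \<le> \<rho> w - 1" by (rule ln_le_minus_one[OF rpos])
    moreover have "ln (\<rho> w) = ln (pr P ?ac w) + ln (pr P ?bc w) - ln (pr P ?abc w) - ln (pr P C w)"
      unfolding \<rho>_def using pos by (simp add: ln_div ln_mult)
    ultimately have "(1 - \<rho> w) \<le> ln (pr P ?abc w) + ln (pr P C w) - ln (pr P ?ac w) - ln (pr P ?bc w)"
      by linarith
    then have "(1 - \<rho> w) / ln 2 \<le> (ln (pr P ?abc w) + ln (pr P C w) - ln (pr P ?ac w) - ln (pr P ?bc w)) / ln 2"
      by (simp add: divide_right_mono)
    also have "\<dots> = log 2 (pr P ?abc w) + log 2 (pr P C w) - log 2 (pr P ?ac w) - log 2 (pr P ?bc w)"
      by (simp add: log_def diff_divide_distrib add_divide_distrib)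
    finally show ?thesis using p by (simp add: mult_left_mono times_divide_eq_right[symmetric] del: times_divide_eq_right)
  qed
  have "0 \<le> ((\<Sum>w\<in>UNIV. P w) - (\<Sum>w\<in>UNIV. P w * \<rho> w)) / ln 2"
    using key_ineq[OF nn, where A=A and B=B and C=C] unfolding \<rho>_def by simp
  also have "\<dots> = (\<Sum>w\<in>UNIV. P w * (1 - \<rho> w) / ln 2)"
    by (simp add: sum_divide_distrib[symmetric] sum_subtractf algebra_simps)
  also have "\<dots> \<le> cond_mi P A B C" unfolding eq by (rule sum_mono[OF pt])
  finally show ?thesis .
qed



lemma info_facts:
  fixes p :: "'x1::finite \<times> 'x2::finite \<times> 'x3::finite \<times> 'y::finite \<Rightarrow> real"
    and q1 :: "'x1 \<Rightarrow> 'u1::finite \<Rightarrow> real" and q2 :: "'x2 \<Rightarrow> 'u2::finite \<Rightarrow> real"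
    and q3 :: "'x3 \<Rightarrow> 'u3::finite \<Rightarrow> real"
  assumes ch: "is_pmf p" "is_channel q1" "is_channel q2" "is_channel q3"
  defines "P \<equiv> jointP p q1 q2 q3"
  defines "A \<equiv> mi P (\<lambda>w. (X1 w, X2 w, X3 w)) (\<lambda>w. (U1 w, U2 w, U3 w))"
    and "B \<equiv> cond_mi P (\<lambda>w. (X2 w, X3 w)) (\<lambda>w. (U2 w, U3 w)) U1"
    and "g1 \<equiv> cond_mi P U1 X1 (\<lambda>w. (U2 w, U3 w))"
    and "g2 \<equiv> cond_mi P U2 X2 (\<lambda>w. (U1 w, U3 w))"
    and "g3 \<equiv> cond_mi P U3 X3 (\<lambda>w. (U1 w, U2 w))"
    and "g13 \<equiv> cond_mi P (\<lambda>w. (X1 w, X3 w)) (\<lambda>w. (U1 w, U3 w)) U2"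
    and "g12 \<equiv> cond_mi P (\<lambda>w. (X1 w, X2 w)) (\<lambda>w. (U1 w, U2 w)) U3"
  shows "0 \<le> g1 \<and> 0 \<le> g2 \<and> 0 \<le> g3 \<and> A - B \<ge> g1 \<and> B - g2 \<ge> g3 \<and> A - g2 \<ge> g13 \<and> A - B + g2 \<ge> g12"
proof -
  have nn: "\<forall>w. 0 \<le> P w" unfolding P_def by (rule jointP_nn[OF ch])
  have n1: "0 \<le> g1" "0 \<le> g2" "0 \<le> g3" unfolding g1_def g2_def g3_def by (rule cond_mi_nonneg[OF nn])+
  have sh1: "0 \<le> mi P U1 (\<lambda>w. (U2 w, U3 w))" unfolding mi_def by (rule cond_mi_nonneg[OF nn])
  have sh2: "0 \<le> cond_mi P U2 U3 U1" by (rule cond_mi_nonneg[OF nn])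
  have sh3: "0 \<le> mi P (\<lambda>w. (U1 w, U3 w)) U2" unfolding mi_def by (rule cond_mi_nonneg[OF nn])
  have sh4: "0 \<le> mi P U1 U3" unfolding mi_def by (rule cond_mi_nonneg[OF nn])
  let ?h1 = "hs1 p q1 q2 q3" and ?h2 = "hs2 p q1 q2 q3" and ?h3 = "hs3 p q1 q2 q3"
  note st1 = step1[OF ch, folded P_def] and st2 = step2[OF ch, folded P_def] and st3 = step3[OF ch, folded P_def]
  note defs = X1_def X2_def X3_def U1_def U2_def U3_def
  have S1: "entropy P (\<lambda>w. (U1 w, X1 w, U2 w, U3 w)) = entropy P (\<lambda>w. (X1 w, U2 w, U3 w)) - ?h1"
  proof -
    have "entropy P (\<lambda>w. (U1 w, X1 w, U2 w, U3 w)) = entropy P (\<lambda>w. ((X1 w, U2 w, U3 w), U1 w))"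
      by (rule entropy_cong) auto
    also have "\<dots> = entropy P (\<lambda>w. (X1 w, U2 w, U3 w)) - ?h1"
      by (rule st1) (auto simp: defs)
    finally show ?thesis .
  qed
  have S2: "entropy P (\<lambda>w. (U2 w, X2 w, U1 w, U3 w)) = entropy P (\<lambda>w. (X2 w, U1 w, U3 w)) - ?h2"
  proof -
    have "entropy P (\<lambda>w. (U2 w, X2 w, U1 w, U3 w)) = entropy P (\<lambda>w. ((X2 w, U1 w, U3 w), U2 w))"
      by (rule entropy_cong) auto
    also have "\<dots> = entropy P (\<lambda>w. (X2 w, U1 w, U3 w)) - ?h2"
      by (rule st2) (auto simp: defs)
    finally show ?thesis .
  qed
  have S3: "entropy P (\<lambda>w. (U3 w, X3 w, U1 w, U2 w)) = entropy P (\<lambda>w. (X3 w, U1 w, U2 w)) - ?h3"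
  proof -
    have "entropy P (\<lambda>w. (U3 w, X3 w, U1 w, U2 w)) = entropy P (\<lambda>w. ((X3 w, U1 w, U2 w), U3 w))"
      by (rule entropy_cong) auto
    also have "\<dots> = entropy P (\<lambda>w. (X3 w, U1 w, U2 w)) - ?h3"
      by (rule st3) (auto simp: defs)
    finally show ?thesis .
  qed
  have S23: "entropy P (\<lambda>w. ((X2 w, X3 w), (U2 w, U3 w), U1 w)) = entropy P (\<lambda>w. ((X2 w, X3 w), U1 w)) - ?h2 - ?h3"
  proof -
    have "entropy P (\<lambda>w. ((X2 w, X3 w), (U2 w, U3 w), U1 w)) = entropy P (\<lambda>w. ((((X2 w, X3 w), U1 w), U2 w), U3 w))"
      by (rule entropy_cong) auto
    also have "\<dots> = entropy P (\<lambda>w. (((X2 w, X3 w), U1 w), U2 w)) - ?h3"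
      by (rule st3) (auto simp: defs)
    also have "entropy P (\<lambda>w. (((X2 w, X3 w), U1 w), U2 w)) = entropy P (\<lambda>w. ((X2 w, X3 w), U1 w)) - ?h2"
      by (rule st2) (auto simp: defs)
    finally show ?thesis by simp
  qed
  have S13: "entropy P (\<lambda>w. ((X1 w, X3 w), (U1 w, U3 w), U2 w)) = entropy P (\<lambda>w. ((X1 w, X3 w), U2 w)) - ?h1 - ?h3"
  proof -
    have "entropy P (\<lambda>w. ((X1 w, X3 w), (U1 w, U3 w), U2 w)) = entropy P (\<lambda>w. ((((X1 w, X3 w), U2 w), U1 w), U3 w))"
      by (rule entropy_cong) auto
    also have "\<dots> = entropy P (\<lambda>w. (((X1 w, X3 w), U2 w), U1 w)) - ?h3"
      by (rule st3) (auto simp: defs)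
    also have "entropy P (\<lambda>w. (((X1 w, X3 w), U2 w), U1 w)) = entropy P (\<lambda>w. ((X1 w, X3 w), U2 w)) - ?h1"
      by (rule st1) (auto simp: defs)
    finally show ?thesis by simp
  qed
  have S12: "entropy P (\<lambda>w. ((X1 w, X2 w), (U1 w, U2 w), U3 w)) = entropy P (\<lambda>w. ((X1 w, X2 w), U3 w)) - ?h1 - ?h2"
  proof -
    have "entropy P (\<lambda>w. ((X1 w, X2 w), (U1 w, U2 w), U3 w)) = entropy P (\<lambda>w. ((((X1 w, X2 w), U3 w), U1 w), U2 w))"
      by (rule entropy_cong) auto
    also have "\<dots> = entropy P (\<lambda>w. (((X1 w, X2 w), U3 w), U1 w)) - ?h2"
      by (rule st2) (auto simp: defs)
    also have "entropy P (\<lambda>w. (((X1 w, X2 w), U3 w), U1 w)) = entropy P (\<lambda>w. ((X1 w, X2 w), U3 w)) - ?h1"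
      by (rule st1) (auto simp: defs)
    finally show ?thesis by simp
  qed
  have S123: "entropy P (\<lambda>w. ((X1 w, X2 w, X3 w), (U1 w, U2 w, U3 w), ())) = entropy P (\<lambda>w. ((X1 w, X2 w, X3 w), ())) - ?h1 - ?h2 - ?h3"
  proof -
    have "entropy P (\<lambda>w. ((X1 w, X2 w, X3 w), (U1 w, U2 w, U3 w), ())) = entropy P (\<lambda>w. (((((X1 w, X2 w, X3 w), ()), U1 w), U2 w), U3 w))"
      by (rule entropy_cong) auto
    also have "\<dots> = entropy P (\<lambda>w. ((((X1 w, X2 w, X3 w), ()), U1 w), U2 w)) - ?h3"
      by (rule st3) (auto simp: defs)
    also have "entropy P (\<lambda>w. ((((X1 w, X2 w, X3 w), ()), U1 w), U2 w)) = entropy P (\<lambda>w. (((X1 w, X2 w, X3 w), ()), U1 w)) - ?h2"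
      by (rule st2) (auto simp: defs)
    also have "entropy P (\<lambda>w. (((X1 w, X2 w, X3 w), ()), U1 w)) = entropy P (\<lambda>w. ((X1 w, X2 w, X3 w), ())) - ?h1"
      by (rule st1) (auto simp: defs)
    finally show ?thesis by simp
  qed
  have c1: "entropy P (\<lambda>w. (U2 w, U1 w, U3 w)) = entropy P (\<lambda>w. (U1 w, U2 w, U3 w))"
    "entropy P (\<lambda>w. (U3 w, U1 w, U2 w)) = entropy P (\<lambda>w. (U1 w, U2 w, U3 w))"
    "entropy P (\<lambda>w. ((U2 w, U3 w), U1 w)) = entropy P (\<lambda>w. (U1 w, U2 w, U3 w))"
    "entropy P (\<lambda>w. ((U1 w, U3 w), U2 w)) = entropy P (\<lambda>w. (U1 w, U2 w, U3 w))"
    "entropy P (\<lambda>w. ((U1 w, U2 w), U3 w)) = entropy P (\<lambda>w. (U1 w, U2 w, U3 w))"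
    "entropy P (\<lambda>w. ((U1 w, U2 w, U3 w), ())) = entropy P (\<lambda>w. (U1 w, U2 w, U3 w))"
    "entropy P (\<lambda>w. (U1 w, ())) = entropy P U1"
    "entropy P (\<lambda>w. (U2 w, ())) = entropy P U2"
    "entropy P (\<lambda>w. (U3 w, ())) = entropy P U3"
    "entropy P (\<lambda>w. ((U2 w, U3 w), ())) = entropy P (\<lambda>w. (U2 w, U3 w))"
    "entropy P (\<lambda>w. (U1 w, (U2 w, U3 w), ())) = entropy P (\<lambda>w. (U1 w, U2 w, U3 w))"
    "entropy P (\<lambda>w. (U2 w, U1 w)) = entropy P (\<lambda>w. (U1 w, U2 w))"
    "entropy P (\<lambda>w. (U3 w, U1 w)) = entropy P (\<lambda>w. (U1 w, U3 w))"
    "entropy P (\<lambda>w. (U2 w, U3 w, U1 w)) = entropy P (\<lambda>w. (U1 w, U2 w, U3 w))"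
    "entropy P (\<lambda>w. ((U1 w, U3 w), ())) = entropy P (\<lambda>w. (U1 w, U3 w))"
    "entropy P (\<lambda>w. ((U1 w, U3 w), U2 w, ())) = entropy P (\<lambda>w. (U1 w, U2 w, U3 w))"
    "entropy P (\<lambda>w. (U1 w, U3 w, ())) = entropy P (\<lambda>w. (U1 w, U3 w))"
    by (rule entropy_cong; auto)+
  show ?thesis
    using n1 sh1 sh2 sh3 sh4 S1 S2 S3 S23 S13 S12 S123 c1
    unfolding A_def B_def g1_def g2_def g3_def g13_def g12_def cond_mi_def mi_def
    by linarith
qed


lemma equiv_i_ii:
  fixes p :: "'x1::finite \<times> 'x2::finite \<times> 'x3::finite \<times> 'y::finite \<Rightarrow> real"
    and q1 :: "'x1 \<Rightarrow> 'u1::finite \<Rightarrow> real" and q2 :: "'x2 \<Rightarrow> 'u2::finite \<Rightarrow> real"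
    and q3 :: "'x3 \<Rightarrow> 'u3::finite \<Rightarrow> real"
  assumes ch: "is_pmf p" "is_channel q1" "is_channel q2" "is_channel q3"
  shows "cond_i (jointP p q1 q2 q3) \<Delta> Csum \<longleftrightarrow> cond_ii (jointP p q1 q2 q3) \<Delta> Csum"
proof
  assume "cond_i (jointP p q1 q2 q3) \<Delta> Csum"
  then show "cond_ii (jointP p q1 q2 q3) \<Delta> Csum"
    unfolding cond_i_def cond_ii_def by auto
next
  assume h: "cond_ii (jointP p q1 q2 q3) \<Delta> Csum"
  let ?P = "jointP p q1 q2 q3"
  define A where "A = mi ?P (\<lambda>w. (X1 w, X2 w, X3 w)) (\<lambda>w. (U1 w, U2 w, U3 w))"
  define B where "B = cond_mi ?P (\<lambda>w. (X2 w, X3 w)) (\<lambda>w. (U2 w, U3 w)) U1"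
  define g2 where "g2 = cond_mi ?P U2 X2 (\<lambda>w. (U1 w, U3 w))"
  note f = info_facts[OF ch, folded A_def B_def g2_def]
  show "cond_i ?P \<Delta> Csum"
    unfolding cond_i_def
  proof (intro conjI exI)
    show "\<Delta> \<le> mi ?P Yv (\<lambda>w. (U1 w, U2 w, U3 w))" using h by (simp add: cond_ii_def)
    have cs: "Csum \<ge> A + B" using h by (simp add: cond_ii_def A_def B_def)
    show "0 \<le> Csum - 2 * B" "0 \<le> g2" "0 \<le> B - g2" "0 \<le> B" "Csum - 2 * B + g2 + (B - g2) + B = Csum"
      "0 \<le> A - B" "Csum - 2 * B \<ge> A - B" "g2 \<ge> g2" "B - g2 \<ge> B - g2" "B \<ge> g2 + (B - g2)"
      "A - B \<ge> cond_mi ?P U1 X1 (\<lambda>w. (U2 w, U3 w))"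
      "g2 \<ge> cond_mi ?P U2 X2 (\<lambda>w. (U1 w, U3 w))"
      "B - g2 \<ge> cond_mi ?P U3 X3 (\<lambda>w. (U1 w, U2 w))"
      "g2 + (B - g2) \<ge> cond_mi ?P (\<lambda>w. (X2 w, X3 w)) (\<lambda>w. (U2 w, U3 w)) U1"
      "A - B + (B - g2) \<ge> cond_mi ?P (\<lambda>w. (X1 w, X3 w)) (\<lambda>w. (U1 w, U3 w)) U2"
      "A - B + g2 \<ge> cond_mi ?P (\<lambda>w. (X1 w, X2 w)) (\<lambda>w. (U1 w, U2 w)) U3"
      "A - B + g2 + (B - g2) \<ge> mi ?P (\<lambda>w. (X1 w, X2 w, X3 w)) (\<lambda>w. (U1 w, U2 w, U3 w))"
      using f cs by (simp_all add: g2_def B_def A_def)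
    show "0 \<le> g2" "0 \<le> B - g2" using f by (simp_all add: g2_def B_def)
  qed
qed

theorem mainTheorem2:
  fixes p :: "'x1::finite \<times> 'x2::finite \<times> 'x3::finite \<times> 'y::finite \<Rightarrow> real"
  assumes "is_pmf p"
  shows "(\<forall>(q1::'x1 \<Rightarrow> 'u1::finite \<Rightarrow> real) (q2::'x2 \<Rightarrow> 'u2::finite \<Rightarrow> real)
            (q3::'x3 \<Rightarrow> 'u3::finite \<Rightarrow> real) \<Delta> Csum.
            is_channel q1 \<longrightarrow> is_channel q2 \<longrightarrow> is_channel q3 \<longrightarrow> 0 \<le> \<Delta> \<longrightarrow> 0 \<le> Csum \<longrightarrow>
            (cond_i (jointP p q1 q2 q3) \<Delta> Csum \<longleftrightarrow> cond_ii (jointP p q1 q2 q3) \<Delta> Csum))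
       \<and> RI_sum p TYPE('u1) TYPE('u2) TYPE('u3) =
           {(\<Delta>, Csum). 0 \<le> \<Delta> \<and> 0 \<le> Csum \<and>
              (\<exists>(q1::'x1 \<Rightarrow> 'u1 \<Rightarrow> real) (q2::'x2 \<Rightarrow> 'u2 \<Rightarrow> real) (q3::'x3 \<Rightarrow> 'u3 \<Rightarrow> real).
                 is_channel q1 \<and> is_channel q2 \<and> is_channel q3 \<and>
                 cond_ii (jointP p q1 q2 q3) \<Delta> Csum)}"
  proof (rule conjI)
  show "\<forall>(q1::'x1 \<Rightarrow> 'u1::finite \<Rightarrow> real) (q2::'x2 \<Rightarrow> 'u2::finite \<Rightarrow> real)
            (q3::'x3 \<Rightarrow> 'u3::finite \<Rightarrow> real) \<Delta> Csum.
            is_channel q1 \<longrightarrow> is_channel q2 \<longrightarrow> is_channel q3 \<longrightarrow> 0 \<le> \<Delta> \<longrightarrow> 0 \<le> Csum \<longrightarrow>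
            (cond_i (jointP p q1 q2 q3) \<Delta> Csum \<longleftrightarrow> cond_ii (jointP p q1 q2 q3) \<Delta> Csum)"
    using equiv_i_ii[OF assms] by blast
  show "RI_sum p TYPE('u1) TYPE('u2) TYPE('u3) =
           {(\<Delta>, Csum). 0 \<le> \<Delta> \<and> 0 \<le> Csum \<and>
              (\<exists>(q1::'x1 \<Rightarrow> 'u1 \<Rightarrow> real) (q2::'x2 \<Rightarrow> 'u2 \<Rightarrow> real) (q3::'x3 \<Rightarrow> 'u3 \<Rightarrow> real).
                 is_channel q1 \<and> is_channel q2 \<and> is_channel q3 \<and>
                 cond_ii (jointP p q1 q2 q3) \<Delta> Csum)}"
    unfolding RI_sum_def using equiv_i_ii[OF assms] by blast
qed

end
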